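(* For Lebesgue almost all $x\in(0,1)$, $\lim_{n\to\infty}\frac{\log M_n(x)}{\log n}=1$.
   Context: Signed Engel expansion: define $T\colon[0,1)\to[0,1)$ by: for $k\in\mathbb{N}$, $Tx=\lceil 1/x\rceil x-1$ if $x\in(\frac{1}{2k},\frac{1}{2k-1})$; $Tx=1-\lfloor 1/x\rfloor x$ if $x\in(\frac{1}{2k+1},\frac{1}{2k})$; $Tx=0$ if $x\in\{0\}\cup\{1/n\colon n\ge 2\}$. For $x\in(0,1)$, $d_1(x)=\lceil 1/x\rceil$ if $x\in[\frac{1}{2k},\frac{1}{2k-1})$ for some $k\in\mathbb{N}$, and $d_1(x)=\lfloor 1/x\rfloor$ if $x\in[\frac{1}{2k+1},\frac{1}{2k})$ for some $k\in\mathbb{N}$; $d_{n+1}(x)=d_1(T^nx)$. For irrational $x\in(0,1)$, $R_1(x)=d_1(x)$, $R_n(x)=d_n(x)/d_{n-1}(x)$ for $n\ge2$, and $M_n(x)=\max\{R_k(x)\colon 1\le k\le n\}$. *)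

theory Defs
  imports "HOL-Analysis.Analysis"
begin

text \<open>Signed Engel expansion map T on [0,1) (values outside [0,1) are irrelevant; set to 0).\<close>
definition sengel_T :: "real \<Rightarrow> real" where
  "sengel_T x =
     (if x = 0 \<or> (\<exists>n::nat. n \<ge> 2 \<and> x = 1 / real n) then 0
      else if \<exists>k::nat. k \<ge> 1 \<and> 1 / real (2*k) < x \<and> x < 1 / (real (2*k) - 1)
        then real_of_int \<lceil>1 / x\<rceil> * x - 1
      else if \<exists>k::nat. k \<ge> 1 \<and> 1 / real (2*k+1) < x \<and> x < 1 / real (2*k)
        then 1 - real_of_int \<lfloor>1 / x\<rfloor> * x
      else 0)"

definition sengel_d1 :: "real \<Rightarrow> int" where
  "sengel_d1 x =
     (if \<exists>k::nat. k \<ge> 1 \<and> 1 / real (2*k) \<le> x \<and> x < 1 / (real (2*k) - 1)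
      then \<lceil>1 / x\<rceil> else \<lfloor>1 / x\<rfloor>)"

definition sengel_d :: "nat \<Rightarrow> real \<Rightarrow> int" where
  "sengel_d n x = sengel_d1 ((sengel_T ^^ (n - 1)) x)"

definition sengel_R :: "nat \<Rightarrow> real \<Rightarrow> real" where
  "sengel_R n x = (if n \<le> 1 then real_of_int (sengel_d 1 x)
                   else real_of_int (sengel_d n x) / real_of_int (sengel_d (n - 1) x))"

definition sengel_M :: "nat \<Rightarrow> real \<Rightarrow> real" where
  "sengel_M n x = Max ((\<lambda>k. sengel_R k x) ` {1..n})"

end

theory Submission
  imports Defs "HOL-Real_Asymp.Real_Asymp"
begin


definition Dg :: "real \<Rightarrow> real" where "Dg x = 2 * of_int \<lfloor>(1/x + 1)/2\<rfloor>"
definition Sm :: "real \<Rightarrow> real" where "Sm x = \<bar>Dg x * x - 1\<bar>"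
definition dig :: "nat \<Rightarrow> real \<Rightarrow> real" where "dig n x = Dg ((Sm ^^ n) x)"

lemma Dg_meas[measurable]: "Dg \<in> borel_measurable borel"
  unfolding Dg_def by measurable
lemma Sm_meas[measurable]: "Sm \<in> borel_measurable borel"
  unfolding Sm_def by measurable
lemma Smpow_meas[measurable]: "(Sm ^^ n) \<in> borel_measurable borel"
  by (induction n) auto
lemma dig_meas[measurable]: "dig n \<in> borel_measurable borel"
  unfolding dig_def by measurable

lemma dig_Suc: "dig (Suc n) x = dig n (Sm x)"
  unfolding dig_def by (simp only: funpow_Suc_right o_def)

lemma Dg_eq_iff:
  fixes k :: nat assumes "x > 0"
  shows "Dg x = 2 * (real k + 1) \<longleftrightarrow> 1/(2*real k+3) < x \<and> x \<le> 1/(2*real k+1)"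
proof -
  have e: "2 * (real k + 1) = 2 * real_of_int (int k + 1)" by simp
  have "Dg x = 2 * (real k + 1) \<longleftrightarrow> \<lfloor>(1/x + 1)/2\<rfloor> = int k + 1"
    unfolding Dg_def e by (simp only: mult_cancel_left of_int_eq_iff) simp
  also have "\<dots> \<longleftrightarrow> real k + 1 \<le> (1/x+1)/2 \<and> (1/x+1)/2 < real k + 2"
    by (simp add: floor_eq_iff)
  also have "\<dots> \<longleftrightarrow> 2*real k+1 \<le> 1/x \<and> 1/x < 2 * real k + 3" by auto
  also have "\<dots> \<longleftrightarrow> 1/(2*real k+3) < x \<and> x \<le> 1/(2*real k+1)"
    using assms by (auto simp: field_simps)
  finally show ?thesis .
qed

lemma Dg_ex:
  assumes "0 < x" "x \<le> 1"
  shows "\<exists>k::nat. Dg x = 2 * (real k + 1)"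
proof -
  have "1/x \<ge> 1" using assms by (auto simp: field_simps)
  then have "\<lfloor>(1/x + 1)/2\<rfloor> \<ge> 1" by (simp add: le_floor_iff)
  then obtain k::nat where "\<lfloor>(1/x + 1)/2\<rfloor> = int k + 1"
    by (metis add.commute nonneg_int_cases zle_iff_zadd)
  then show ?thesis unfolding Dg_def by (intro exI[of _ k]) simp
qed

lemma Dg_upper: "Dg x \<le> 1/x + 1"
proof -
  have "real_of_int \<lfloor>(1/x + 1)/2\<rfloor> \<le> (1/x + 1)/2" by (rule of_int_floor_le)
  then show ?thesis unfolding Dg_def by (simp add: field_simps)
qed
lemma Dg_lower: "Dg x > 1/x - 1"
proof -
  have "(1/x + 1)/2 < real_of_int \<lfloor>(1/x + 1)/2\<rfloor> + 1" by (rule real_of_int_floor_add_one_gt)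
  then show ?thesis unfolding Dg_def by (simp add: field_simps)
qed

lemma affine_emeasure:
  fixes c t :: real
  assumes "c \<noteq> 0" and [measurable]: "X \<in> sets borel"
  shows "emeasure lborel X = ennreal \<bar>c\<bar> * emeasure lborel {x. t + c * x \<in> X}"
proof -
  have "emeasure lborel X = emeasure (density (distr lborel borel (\<lambda>x. t + c * x)) (\<lambda>_. ennreal (abs c))) X"
    using lborel_real_affine[OF assms(1), of t] by simp
  also have "\<dots> = ennreal \<bar>c\<bar> * emeasure (distr lborel borel (\<lambda>x. t + c * x)) X"
    by (simp add: emeasure_density nn_integral_cmult_indicator)
  also have "\<dots> = ennreal \<bar>c\<bar> * emeasure lborel {x. t + c * x \<in> X}"
    by (subst emeasure_distr) (auto simp: vimage_def)
  finally show ?thesis .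
qed



lemma affine_emeasure':
  fixes c t :: real
  assumes "c \<noteq> 0" and [measurable]: "X \<in> sets borel"
  shows "emeasure lborel {x. t + c * x \<in> X} = ennreal (1/\<bar>c\<bar>) * emeasure lborel X"
proof -
  have "ennreal (1/\<bar>c\<bar>) * emeasure lborel X = (ennreal (1/\<bar>c\<bar>) * ennreal \<bar>c\<bar>) * emeasure lborel {x. t + c * x \<in> X}"
    using affine_emeasure[OF assms, of t] by (simp add: mult.assoc)
  also have "ennreal (1/\<bar>c\<bar>) * ennreal \<bar>c\<bar> = 1"
    using assms(1) by (simp add: ennreal_mult[symmetric])
  finally show ?thesis by simp
qed

lemma emeasure_drop_point:
  assumes [measurable]: "A \<in> sets borel" "B \<in> sets borel" and "\<And>x. x \<noteq> p \<Longrightarrow> x \<in> A \<longleftrightarrow> x \<in> B"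
  shows "emeasure lborel A = emeasure lborel B"
proof (rule emeasure_eq_AE)
  show "AE x in lborel. (x \<in> A) = (x \<in> B)"
    using AE_lborel_singleton[of p] by eventually_elim (use assms(3) in auto)
qed auto

lemma lemA:
  fixes k :: nat
  assumes [measurable]: "E \<in> sets borel"
  shows "emeasure lborel ({x. Dg x = 2*(real k+1)} \<inter> {x. Sm x \<in> E}) =
    ennreal (1/(2*(real k+1))) * (emeasure lborel (E \<inter> {0<..1/(2*real k+3)}) + emeasure lborel (E \<inter> {0<..1/(2*real k+1)}))"
proof -
  define a where "a = 2*(real k+1)"
  have a: "a > 0" "a \<ge> 2" unfolding a_def by auto
  define P1 where "P1 = {x. 1 + (-a)*x \<in> E \<inter> {0<..<1/(2*real k+3)}}"
  define P2 where "P2 = {x. -1 + a*x \<in> E \<inter> {0..1/(2*real k+1)}}"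
  have [measurable]: "P1 \<in> sets borel" "P2 \<in> sets borel" unfolding P1_def P2_def by measurable
  have set: "{x. Dg x = a} \<inter> {x. Sm x \<in> E} = P1 \<union> P2"
  proof (intro equalityI subsetI)
    fix x assume x: "x \<in> {x. Dg x = a} \<inter> {x. Sm x \<in> E}"
    have xp: "x > 0"
    proof (rule ccontr)
      assume "\<not> x > 0" then have "1/x \<le> 0" by (simp add: divide_nonpos_pos not_less)
      moreover have "Dg x = a" using x by auto
      ultimately show False using Dg_upper[of x] a by linarith
    qed
    have b: "1/(2*real k+3) < x" "x \<le> 1/(2*real k+1)" using Dg_eq_iff[OF xp, of k] x a_def by auto
    have b': "(2*real k+3) * x > 1" "(2*real k+1) * x \<le> 1" using b by (auto simp: field_simps)
    show "x \<in> P1 \<union> P2"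
    proof (cases "a * x < 1")
      case True
      then have "Sm x = 1 - a * x" using x unfolding Sm_def by auto
      moreover have "1 - a*x < 1/(2*real k+3)"
      proof -
        have "(2*real k+2)*((2*real k+3) * x) > (2*real k+2)*1"
          using b'(1) by (intro mult_strict_left_mono) auto
        then show ?thesis unfolding a_def by (simp add: field_simps)
      qed
      ultimately show ?thesis using x True unfolding P1_def by auto
    next
      case False
      then have "Sm x = a * x - 1" using x unfolding Sm_def by auto
      moreover have "a*x - 1 \<le> 1/(2*real k+1)"
      proof -
        have "(2*real k+2)*((2*real k+1) * x) \<le> (2*real k+2)*1"
          using b'(2) by (intro mult_left_mono) auto
        then show ?thesis unfolding a_def by (simp add: field_simps)
      qed
      ultimately show ?thesis using x False unfolding P2_def by auto
    qed
  next
    fix x assume "x \<in> P1 \<union> P2"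
    then show "x \<in> {x. Dg x = a} \<inter> {x. Sm x \<in> E}"
    proof
      assume "x \<in> P1"
      then have h: "1 - a*x \<in> E" "0 < 1 - a*x" "1 - a*x < 1/(2*real k+3)" unfolding P1_def by auto
      have "1/(2*real k+3) \<le> 1" by simp
      then have "a*x > 0" using h(3) by linarith
      then have xp: "x > 0" using a by (simp add: zero_less_mult_iff)
      have "(2*real k+3) * (1 - a*x) < 1" using h(3) by (simp add: field_simps)
      then have "(2*real k+3) - (2*real k+2)*((2*real k+3)*x) < 1" unfolding a_def by (simp add: algebra_simps)
      then have "(2*real k+2)*1 < (2*real k+2)*((2*real k+3)*x)" by (smt (verit))
      then have u: "1 < (2*real k+3)*x" by (subst (asm) mult_less_cancel_left_pos) auto
      have "(2*real k+2)*x < 1" using h(2) unfolding a_def by (simp add: algebra_simps)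
      then have v: "(2*real k+1)*x \<le> 1" using xp by (simp add: algebra_simps)
      have "1/(2*real k+3) < x \<and> x \<le> 1/(2*real k+1)" using u v by (simp add: field_simps)
      then have "Dg x = a" using Dg_eq_iff[OF xp, of k] a_def by auto
      moreover have "Sm x = 1 - a*x" unfolding Sm_def using h(2) \<open>Dg x = a\<close> by auto
      ultimately show ?thesis using h by auto
    next
      assume "x \<in> P2"
      then have h: "a*x - 1 \<in> E" "0 \<le> a*x - 1" "a*x - 1 \<le> 1/(2*real k+1)" unfolding P2_def by auto
      have "a*x > 0" using h(2) by linarith
      then have xp: "x > 0" using a by (simp add: zero_less_mult_iff)
      have "(2*real k+1) * (a*x - 1) \<le> 1" using h(3) by (simp add: field_simps)
      then have "(2*real k+2)*((2*real k+1)*x) - (2*real k+1) \<le> 1" unfolding a_def by (simp add: algebra_simps)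
      then have "(2*real k+2)*((2*real k+1)*x) \<le> (2*real k+2)*1" by (smt (verit))
      then have v: "(2*real k+1)*x \<le> 1" by (subst (asm) mult_le_cancel_left_pos) auto
      have "1 \<le> (2*real k+2)*x" using h(2) unfolding a_def by (simp add: algebra_simps)
      then have u: "1 < (2*real k+3)*x" using xp by (simp add: algebra_simps)
      have "1/(2*real k+3) < x \<and> x \<le> 1/(2*real k+1)" using u v by (simp add: field_simps)
      then have "Dg x = a" using Dg_eq_iff[OF xp, of k] a_def by auto
      moreover have "Sm x = a*x - 1" unfolding Sm_def using h(2) \<open>Dg x = a\<close> by auto
      ultimately show ?thesis using h by auto
    qed
  qed
  have disj: "P1 \<inter> P2 = {}" unfolding P1_def P2_def by auto
  have "emeasure lborel ({x. Dg x = a} \<inter> {x. Sm x \<in> E}) = emeasure lborel P1 + emeasure lborel P2"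
    unfolding set by (rule plus_emeasure[symmetric]) (use disj in auto)
  also have "emeasure lborel P1 = ennreal (1/a) * emeasure lborel (E \<inter> {0<..<1/(2*real k+3)})"
    unfolding P1_def using a by (subst affine_emeasure') auto
  also have "emeasure lborel (E \<inter> {0<..<1/(2*real k+3)}) = emeasure lborel (E \<inter> {0<..1/(2*real k+3)})"
    by (rule emeasure_drop_point[where p="1/(2*real k+3)"]) auto
  also have "emeasure lborel P2 = ennreal (1/a) * emeasure lborel (E \<inter> {0..1/(2*real k+1)})"
    unfolding P2_def using a by (subst affine_emeasure') auto
  also have "emeasure lborel (E \<inter> {0..1/(2*real k+1)}) = emeasure lborel (E \<inter> {0<..1/(2*real k+1)})"
    by (rule emeasure_drop_point[where p=0]) auto
  finally show ?thesis unfolding a_def by (simp add: distrib_left)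
qed



lemma Dg_level_meas[measurable]: "{x. Dg x = c} \<in> sets borel"
  by measurable

lemma emeasure_level:
  fixes k :: nat
  shows "emeasure lborel {x. Dg x = 2*(real k+1)} =
    ennreal (1/(2*(real k+1)) * (1/(2*real k+3) + 1/(2*real k+1)))"
proof -
  have "emeasure lborel {x. Dg x = 2*(real k+1)} = emeasure lborel ({x. Dg x = 2*(real k+1)} \<inter> {x. Sm x \<in> UNIV})"
    by simp
  also have "\<dots> = ennreal (1/(2*(real k+1))) * (ennreal (1/(2*real k+3)) + ennreal (1/(2*real k+1)))"
    by (subst lemA) auto
  also have "\<dots> = ennreal (1/(2*(real k+1)) * (1/(2*real k+3) + 1/(2*real k+1)))"
    by (simp add: ennreal_plus[symmetric] ennreal_mult[symmetric] del: ennreal_plus)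
  finally show ?thesis .
qed

lemma level_in_interval:
  fixes k i :: nat
  assumes "x > 0"
  shows "Dg x = 2*(real k+1) \<and> x \<le> 1/(2*real i+1) \<longleftrightarrow> Dg x = 2*(real k+1) \<and> i \<le> k"
proof -
  { assume d: "Dg x = 2*(real k+1)"
    then have b: "1/(2*real k+3) < x" "x \<le> 1/(2*real k+1)" using Dg_eq_iff[OF assms, of k] by auto
    have "x \<le> 1/(2*real i+1) \<longleftrightarrow> i \<le> k"
    proof
      assume "x \<le> 1/(2*real i+1)"
      then have "1/(2*real k+3) < 1/(2*real i+1)" using b by linarith
      then have "2*real i+1 < 2*real k+3" by (simp add: field_simps)
      then show "i \<le> k" by linarith
    next
      assume "i \<le> k"
      then have "1/(2*real k+1) \<le> 1/(2*real i+1)" by (simp add: field_simps)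
      then show "x \<le> 1/(2*real i+1)" using b by linarith
    qed }
  then show ?thesis by blast
qed

lemma lemG:
  fixes K :: "nat set" and F :: "nat \<Rightarrow> real set" and c :: real and i :: nat
  assumes Fm[measurable]: "\<And>k. F k \<in> sets borel" and c: "c \<ge> 0"
    and b3: "\<And>k. k \<in> K \<Longrightarrow> emeasure lborel (F k \<inter> {0<..1/(2*real k+3)}) \<le> ennreal (c/(2*real k+3))"
    and b1: "\<And>k. k \<in> K \<Longrightarrow> emeasure lborel (F k \<inter> {0<..1/(2*real k+1)}) \<le> ennreal (c/(2*real k+1))"
  shows "emeasure lborel ({0<..1/(2*real i+1)} \<inter> {x. \<exists>k\<in>K. Dg x = 2*(real k+1) \<and> Sm x \<in> F k})
     \<le> ennreal c * emeasure lborel ({0<..1/(2*real i+1)} \<inter> {x. \<exists>k\<in>K. Dg x = 2*(real k+1)})"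
proof -
  define A where "A k = (if k \<in> K \<and> i \<le> k then {x. Dg x = 2*(real k+1)} \<inter> {x. Sm x \<in> F k} else {})" for k
  define B where "B k = (if k \<in> K \<and> i \<le> k then {x. Dg x = 2*(real k+1)} else {})" for k
  have Am: "range A \<subseteq> sets lborel" unfolding A_def by auto
  have Bm: "range B \<subseteq> sets lborel" unfolding B_def by auto
  have Ad: "disjoint_family A" unfolding A_def disjoint_family_on_def by auto
  have Bd: "disjoint_family B" unfolding B_def disjoint_family_on_def by auto
  have pos: "Dg x = 2*(real k+1) \<Longrightarrow> x > 0" for x and k :: nat
  proof (rule ccontr)
    assume "Dg x = 2*(real k+1)" "\<not> x > 0"
    then have "1/x \<le> 0" "Dg x \<ge> 2" by (auto simp: divide_nonpos_pos not_less)
    then show False using Dg_upper[of x] by linarith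
  qed
  have LA: "{0<..1/(2*real i+1)} \<inter> {x. \<exists>k\<in>K. Dg x = 2*(real k+1) \<and> Sm x \<in> F k} = (\<Union>k. A k)"
    unfolding A_def using level_in_interval pos by (auto split: if_splits) blast+
  have LB: "{0<..1/(2*real i+1)} \<inter> {x. \<exists>k\<in>K. Dg x = 2*(real k+1)} = (\<Union>k. B k)"
    unfolding B_def using level_in_interval pos by (auto split: if_splits) blast+
  have trm: "emeasure lborel (A k) \<le> ennreal c * emeasure lborel (B k)" for k
  proof (cases "k \<in> K \<and> i \<le> k")
    case True
    have "emeasure lborel (A k) = ennreal (1/(2*(real k+1))) *
       (emeasure lborel (F k \<inter> {0<..1/(2*real k+3)}) + emeasure lborel (F k \<inter> {0<..1/(2*real k+1)}))"
      unfolding A_def using True lemA[OF Fm, of k] by simp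
    also have "\<dots> \<le> ennreal (1/(2*(real k+1))) * (ennreal (c/(2*real k+3)) + ennreal (c/(2*real k+1)))"
      using True by (intro mult_left_mono add_mono b1 b3) auto
    also have "\<dots> = ennreal (c * (1/(2*(real k+1)) * (1/(2*real k+3) + 1/(2*real k+1))))"
      using c by (simp add: ennreal_plus[symmetric] ennreal_mult[symmetric] field_simps del: ennreal_plus)
    also have "\<dots> = ennreal c * ennreal (1/(2*(real k+1)) * (1/(2*real k+3) + 1/(2*real k+1)))"
      using c by (subst ennreal_mult[symmetric]) auto
    also have "ennreal (1/(2*(real k+1)) * (1/(2*real k+3) + 1/(2*real k+1))) = emeasure lborel (B k)"
      unfolding B_def using True emeasure_level[of k] by simp
    finally show ?thesis .
  next
    case False
    then show ?thesis unfolding A_def B_def by auto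
  qed
  have "emeasure lborel (\<Union>k. A k) = (\<Sum>k. emeasure lborel (A k))"
    using suminf_emeasure[OF Am Ad] by simp
  also have "\<dots> \<le> (\<Sum>k. ennreal c * emeasure lborel (B k))"
    by (intro suminf_le trm) auto
  also have "\<dots> = ennreal c * emeasure lborel (\<Union>k. B k)"
    using suminf_emeasure[OF Bm Bd] by simp
  finally show ?thesis unfolding LA LB .
qed



definition Pc :: "real \<Rightarrow> real set \<Rightarrow> bool" where
  "Pc c E \<longleftrightarrow> (\<forall>i::nat. emeasure lborel (E \<inter> {0<..1/(2*real i+1)}) \<le> ennreal (c/(2*real i+1)))"

lemma final_bound:
  fixes i :: nat and c :: real and K :: "nat set"
  assumes "c \<ge> 0"
  shows "ennreal c * emeasure lborel ({0<..1/(2*real i+1)} \<inter> {x. \<exists>k\<in>K. Dg x = 2*(real k+1)}) \<le> ennreal (c/(2*real i+1))"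
proof -
  have "emeasure lborel ({0<..1/(2*real i+1)} \<inter> {x. \<exists>k\<in>K. Dg x = 2*(real k+1)}) \<le> emeasure lborel {0<..1/(2*real i+1)}"
    by (intro emeasure_mono) auto
  also have "\<dots> = ennreal (1/(2*real i+1))" by simp
  finally have "ennreal c * emeasure lborel ({0<..1/(2*real i+1)} \<inter> {x. \<exists>k\<in>K. Dg x = 2*(real k+1)}) \<le> ennreal c * ennreal (1/(2*real i+1))"
    by (intro mult_left_mono) auto
  also have "\<dots> = ennreal (c/(2*real i+1))" using assms by (simp add: ennreal_mult[symmetric])
  finally show ?thesis .
qed

lemma Pc_pre:
  assumes [measurable]: "E \<in> sets borel" and c: "c \<ge> 0" and P: "Pc c E"
  shows "Pc c {x. Sm x \<in> E}"
  unfolding Pc_def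
proof
  fix i :: nat
  have sub: "{x. Sm x \<in> E} \<inter> {0<..1/(2*real i+1)} \<subseteq> {0<..1/(2*real i+1)} \<inter> {x. \<exists>k\<in>UNIV. Dg x = 2*(real k+1) \<and> Sm x \<in> (\<lambda>_. E) k}"
  proof
    fix x assume x: "x \<in> {x. Sm x \<in> E} \<inter> {0<..1/(2*real i+1)}"
    have "1/(2*real i+1) \<le> 1" by simp
    moreover have "x \<le> 1/(2*real i+1)" "x > 0" using x by auto
    ultimately have "x \<le> 1" "x > 0" by linarith+
    then obtain k :: nat where "Dg x = 2*(real k+1)" using Dg_ex[of x] by blast
    then show "x \<in> {0<..1/(2*real i+1)} \<inter> {x. \<exists>k\<in>UNIV. Dg x = 2*(real k+1) \<and> Sm x \<in> (\<lambda>_. E) k}" using x by auto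
  qed
  have "emeasure lborel ({x. Sm x \<in> E} \<inter> {0<..1/(2*real i+1)}) \<le> emeasure lborel ({0<..1/(2*real i+1)} \<inter> {x. \<exists>k\<in>UNIV. Dg x = 2*(real k+1) \<and> Sm x \<in> (\<lambda>_. E) k})"
    by (rule emeasure_mono[OF sub]) measurable
  also have "\<dots> \<le> ennreal c * emeasure lborel ({0<..1/(2*real i+1)} \<inter> {x. \<exists>k\<in>UNIV. Dg x = 2*(real k+1)})"
  proof (rule lemG)
    fix k :: nat
    show "emeasure lborel (E \<inter> {0<..1 / (2 * real k + 3)}) \<le> ennreal (c / (2 * real k + 3))"
      using P[unfolded Pc_def, rule_format, of "Suc k"] by (simp add: algebra_simps)
    show "emeasure lborel (E \<inter> {0<..1 / (2 * real k + 1)}) \<le> ennreal (c / (2 * real k + 1))"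
      using P[unfolded Pc_def, rule_format, of k] by simp
  qed (use c in auto)
  also have "\<dots> \<le> ennreal (c/(2*real i+1))" by (rule final_bound[OF c])
  finally show "emeasure lborel ({x. Sm x \<in> E} \<inter> {0<..1/(2*real i+1)}) \<le> ennreal (c/(2*real i+1))" .
qed

lemma Pc_pow:
  assumes [measurable]: "E \<in> sets borel" and c: "c \<ge> 0" and P: "Pc c E"
  shows "Pc c {x. (Sm ^^ n) x \<in> E}"
proof (induction n)
  case 0 then show ?case using P by simp
next
  case (Suc n)
  have "{x. (Sm ^^ Suc n) x \<in> E} = {x. Sm x \<in> {y. (Sm ^^ n) y \<in> E}}"
    by (simp only: funpow_Suc_right o_def mem_Collect_eq)
  also have "Pc c \<dots>" by (rule Pc_pre[OF _ c Suc]) measurable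
  finally show ?case .
qed

lemma upper_base:
  fixes s :: real assumes s: "s \<ge> 1"
  shows "Pc (3/s) {x. Dg (Sm x) > s * Dg x}"
  unfolding Pc_def
proof
  fix i :: nat
  define F where "F k = {y. Dg y > s * (2*(real k+1))}" for k :: nat
  have [measurable]: "F k \<in> sets borel" for k unfolding F_def by measurable
  have sub: "{x. Dg (Sm x) > s * Dg x} \<inter> {0<..1/(2*real i+1)} \<subseteq> {0<..1/(2*real i+1)} \<inter> {x. \<exists>k\<in>UNIV. Dg x = 2*(real k+1) \<and> Sm x \<in> F k}"
  proof
    fix x assume x: "x \<in> {x. Dg (Sm x) > s * Dg x} \<inter> {0<..1/(2*real i+1)}"
    have "1/(2*real i+1) \<le> 1" by simp
    moreover have "x \<le> 1/(2*real i+1)" "x > 0" using x by auto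
    ultimately have "x \<le> 1" "x > 0" by linarith+
    then obtain k :: nat where "Dg x = 2*(real k+1)" using Dg_ex[of x] by blast
    then show "x \<in> {0<..1/(2*real i+1)} \<inter> {x. \<exists>k\<in>UNIV. Dg x = 2*(real k+1) \<and> Sm x \<in> F k}"
      using x unfolding F_def by auto
  qed
  have Fb: "emeasure lborel (F k \<inter> {0<..1/j}) \<le> ennreal ((3/s)/j)" if j: "1 \<le> j" "j \<le> 2*real k+3" for k :: nat and j :: real
  proof -
    define a where "a = s * (2*(real k+1))"
    have "1*2 \<le> s * (2*(real k+1))" by (rule mult_mono) (use s in auto)
    then have a: "a \<ge> 2" unfolding a_def by simp
    have "F k \<inter> {0<..1/j} \<subseteq> {0<..<1/(a-1)}"
    proof
      fix y assume y: "y \<in> F k \<inter> {0<..1/j}"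
      then have "Dg y > a" "y > 0" unfolding F_def a_def by auto
      then have "1/y > a - 1" using Dg_upper[of y] by linarith
      then have "y < 1/(a-1)" using \<open>y>0\<close> a by (simp add: field_simps)
      then show "y \<in> {0<..<1/(a-1)}" using \<open>y>0\<close> by auto
    qed
    then have "emeasure lborel (F k \<inter> {0<..1/j}) \<le> emeasure lborel {0<..<1/(a-1)}"
      by (intro emeasure_mono) auto
    also have "\<dots> = ennreal (1/(a-1))" using a by simp
    also have "\<dots> \<le> ennreal ((3/s)/j)"
    proof (intro ennreal_leI)
      have "s * j \<le> s * (2*real k+3)" using j s by (intro mult_left_mono) auto
      also have "\<dots> \<le> 3*(a-1)"
      proof -
        have h: "0 \<le> s * real k" using s by simp
        have "3*(a-1) - s * (2*real k+3) = 4*(s*real k) + 3*(s-1)" unfolding a_def by (simp add: algebra_simps)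
        moreover have "0 \<le> 4*(s*real k) + 3*(s-1)" by (intro add_nonneg_nonneg) (use h s in auto)
        ultimately have "0 \<le> 3*(a-1) - s * (2*real k+3)" by simp
        then show ?thesis by (simp only: diff_ge_0_iff_ge)
      qed
      finally have "s*j \<le> 3*(a-1)" .
      then show "1/(a-1) \<le> (3/s)/j" using a s j by (simp add: field_simps)
    qed
    finally show ?thesis .
  qed
  have "emeasure lborel ({x. Dg (Sm x) > s * Dg x} \<inter> {0<..1/(2*real i+1)}) \<le> emeasure lborel ({0<..1/(2*real i+1)} \<inter> {x. \<exists>k\<in>UNIV. Dg x = 2*(real k+1) \<and> Sm x \<in> F k})"
    by (rule emeasure_mono[OF sub]) measurable
  also have "\<dots> \<le> ennreal (3/s) * emeasure lborel ({0<..1/(2*real i+1)} \<inter> {x. \<exists>k\<in>UNIV. Dg x = 2*(real k+1)})"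
  proof (rule lemG)
    fix k :: nat
    show "emeasure lborel (F k \<inter> {0<..1 / (2 * real k + 3)}) \<le> ennreal ((3/s) / (2 * real k + 3))"
      by (rule Fb) auto
    show "emeasure lborel (F k \<inter> {0<..1 / (2 * real k + 1)}) \<le> ennreal ((3/s) / (2 * real k + 1))"
      by (rule Fb) auto
  qed (use s in auto)
  also have "\<dots> \<le> ennreal ((3/s)/(2*real i+1))" by (rule final_bound) (use s in auto)
  finally show "emeasure lborel ({x. Dg (Sm x) > s * Dg x} \<inter> {0<..1/(2*real i+1)}) \<le> ennreal ((3/s)/(2*real i+1))" .
qed

lemma upper_event:
  fixes s :: real assumes s: "s \<ge> 1"
  shows "emeasure lborel ({x. dig (Suc n) x > s * dig n x} \<inter> {0<..1}) \<le> ennreal (3/s)"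
proof -
  have "Pc (3/s) {x. (Sm ^^ n) x \<in> {x. Dg (Sm x) > s * Dg x}}"
    by (rule Pc_pow[OF _ _ upper_base[OF s]]) (use s in auto)
  moreover have "{x. (Sm ^^ n) x \<in> {x. Dg (Sm x) > s * Dg x}} = {x. dig (Suc n) x > s * dig n x}"
    unfolding dig_def by (auto simp: funpow_Suc_right)
  ultimately have "emeasure lborel ({x. dig (Suc n) x > s * dig n x} \<inter> {0<..1/(2*real (0::nat)+1)}) \<le> ennreal ((3/s)/(2*real (0::nat)+1))"
    unfolding Pc_def by metis
  then show ?thesis by simp
qed



definition Bset :: "nat \<Rightarrow> real \<Rightarrow> real set" where
  "Bset n t = {x. \<forall>i<n. dig (Suc i) x < t * dig i x}"

lemma Bset_meas[measurable]: "Bset n t \<in> sets borel"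
  unfolding Bset_def by measurable

lemma Bset_Suc: "x \<in> Bset (Suc n) t \<longleftrightarrow> Dg (Sm x) < t * Dg x \<and> Sm x \<in> Bset n t"
proof -
  have d0: "dig 0 x = Dg x" and d1: "dig (Suc 0) x = Dg (Sm x)" unfolding dig_def by simp_all
  have "x \<in> Bset (Suc n) t \<longleftrightarrow> dig (Suc 0) x < t * dig 0 x \<and> (\<forall>i<n. dig (Suc (Suc i)) x < t * dig (Suc i) x)"
    unfolding Bset_def by (auto simp: less_Suc_eq_0_disj)
  also have "\<dots> \<longleftrightarrow> Dg (Sm x) < t * Dg x \<and> Sm x \<in> Bset n t"
    unfolding Bset_def d0 d1 dig_Suc[of "Suc _" x] dig_Suc[of _ x] by (simp add: dig_def)
  finally show ?thesis .
qed

lemma lemH: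
  fixes t j :: real and k :: nat
  assumes t: "t \<ge> 1" and j: "2*real k+1 \<le> j" "j \<le> 2*real k+3"
  shows "emeasure lborel ({0<..1/j} \<inter> {y. Dg y < t*(2*(real k+1))}) \<le> ennreal ((1 - 1/(3*t))/j)"
proof -
  define b where "b = t*(2*(real k+1))"
  have "1*(2*(real k+1)) \<le> t*(2*(real k+1))" by (rule mult_right_mono) (use t in auto)
  then have b2: "2*real k+2 \<le> b" unfolding b_def by simp
  have jp: "j > 0" using j by linarith
  have jb: "j \<le> b + 1" using j b2 by linarith
  then have jb': "1/(b+1) \<le> 1/j" using jp by (simp add: frac_le)
  have "{0<..1/j} \<inter> {y. Dg y < b} \<subseteq> {1/(b+1)<..1/j}"
  proof
    fix y assume y: "y \<in> {0<..1/j} \<inter> {y. Dg y < b}"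
    have "y > 1/(b+1)"
    proof (rule ccontr)
      assume "\<not> y > 1/(b+1)"
      then have "y \<le> 1/(b+1)" by simp
      then have "b + 1 \<le> 1/y" using y b2 by (simp add: field_simps)
      then show False using Dg_lower[of y] y by auto
    qed
    then show "y \<in> {1/(b+1)<..1/j}" using y by auto
  qed
  then have "emeasure lborel ({0<..1/j} \<inter> {y. Dg y < b}) \<le> emeasure lborel {1/(b+1)<..1/j}"
    by (intro emeasure_mono) auto
  also have "\<dots> = ennreal (1/j - 1/(b+1))" using jb' by simp
  also have "\<dots> \<le> ennreal ((1 - 1/(3*t))/j)"
  proof (intro ennreal_leI)
    have h: "0 \<le> t * real k" using t by simp
    have "3*t*j - (b+1) \<ge> 3*t*(2*real k+1) - (b+1)"
      using j t by (simp add: mult_left_mono)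
    moreover have "3*t*(2*real k+1) - (b+1) = 4*(t*real k) + (t - 1)" unfolding b_def by (simp add: algebra_simps)
    moreover have "0 \<le> 4*(t*real k) + (t - 1)" by (intro add_nonneg_nonneg) (use h t in auto)
    ultimately have "0 \<le> 3*t*j - (b+1)" by linarith
    then have "b + 1 \<le> 3*t*j" by simp
    then have "1/(3*t*j) \<le> 1/(b+1)" using jp t b2 by (intro divide_left_mono) auto
    moreover have "(1 - 1/(3*t))/j = 1/j - 1/(3*t*j)" using jp t by (simp add: field_simps)
    ultimately show "1/j - 1/(b+1) \<le> (1 - 1/(3*t))/j" by linarith
  qed
  finally show ?thesis unfolding b_def .
qed

lemma lower_step:
  fixes t :: real and n :: nat
  assumes t: "t \<ge> 1"
    and IH: "\<And>a i. emeasure lborel ({0<..1/(2*real i+1)} \<inter> Bset n t \<inter> {x. Dg x < a})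
         \<le> ennreal ((1 - 1/(3*t))^n) * emeasure lborel ({0<..1/(2*real i+1)} \<inter> {x. Dg x < a})"
  shows "emeasure lborel ({0<..1/(2*real i+1)} \<inter> {x. \<exists>k\<in>K. Dg x = 2*(real k+1) \<and> Sm x \<in> Bset n t \<inter> {y. Dg y < t*(2*(real k+1))}})
     \<le> ennreal ((1 - 1/(3*t))^Suc n) * emeasure lborel ({0<..1/(2*real i+1)} \<inter> {x. \<exists>k\<in>K. Dg x = 2*(real k+1)})"
proof (rule lemG)
  define q where "q = 1 - 1/(3*t)"
  have q: "0 \<le> q" unfolding q_def using t by (simp add: field_simps)
  have gen: "emeasure lborel ((Bset n t \<inter> {y. Dg y < t*(2*(real k+1))}) \<inter> {0<..1/(2*real i'+1)}) \<le> ennreal (q^Suc n/(2*real i'+1))"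
    if "k \<le> i'" "i' \<le> Suc k" for k i' :: nat
  proof -
    have "(Bset n t \<inter> {y. Dg y < t*(2*(real k+1))}) \<inter> {0<..1/(2*real i'+1)} = {0<..1/(2*real i'+1)} \<inter> Bset n t \<inter> {y. Dg y < t*(2*(real k+1))}"
      by auto
    then have "emeasure lborel ((Bset n t \<inter> {y. Dg y < t*(2*(real k+1))}) \<inter> {0<..1/(2*real i'+1)})
       \<le> ennreal (q^n) * emeasure lborel ({0<..1/(2*real i'+1)} \<inter> {x. Dg x < t*(2*(real k+1))})"
      using IH[of i' "t*(2*(real k+1))"] unfolding q_def by simp
    also have "\<dots> \<le> ennreal (q^n) * ennreal (q/(2*real i'+1))"
      unfolding q_def by (intro mult_left_mono lemH) (use t that in auto)
    also have "\<dots> = ennreal (q^Suc n/(2*real i'+1))" using q by (simp add: ennreal_mult[symmetric])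
    finally show ?thesis .
  qed
  fix k :: nat
  show "emeasure lborel ((Bset n t \<inter> {y. Dg y < t*(2*(real k+1))}) \<inter> {0<..1 / (2 * real k + 3)}) \<le> ennreal ((1 - 1/(3*t))^Suc n / (2 * real k + 3))"
    using gen[of k "Suc k"] unfolding q_def by (simp add: algebra_simps)
  show "emeasure lborel ((Bset n t \<inter> {y. Dg y < t*(2*(real k+1))}) \<inter> {0<..1 / (2 * real k + 1)}) \<le> ennreal ((1 - 1/(3*t))^Suc n / (2 * real k + 1))"
    using gen[of k k] unfolding q_def by simp
next
  show "0 \<le> (1 - 1/(3*t))^Suc n" using t by (simp add: field_simps)
qed auto

lemma lower_claim:
  fixes t :: real and n :: nat
  assumes t: "t \<ge> 1"
  shows "emeasure lborel ({0<..1/(2*real i+1)} \<inter> Bset n t \<inter> {x. Dg x < a})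
         \<le> ennreal ((1 - 1/(3*t))^n) * emeasure lborel ({0<..1/(2*real i+1)} \<inter> {x. Dg x < a})"
proof (induction n arbitrary: i a)
  case 0
  then show ?case by (simp add: Bset_def)
next
  case (Suc n)
  define K where "K = {k::nat. 2*(real k+1) < a}"
  have sub1: "{0<..1/(2*real i+1)} \<inter> Bset (Suc n) t \<inter> {x. Dg x < a} \<subseteq>
     {0<..1/(2*real i+1)} \<inter> {x. \<exists>k\<in>K. Dg x = 2*(real k+1) \<and> Sm x \<in> Bset n t \<inter> {y. Dg y < t*(2*(real k+1))}}"
  proof
    fix x assume x: "x \<in> {0<..1/(2*real i+1)} \<inter> Bset (Suc n) t \<inter> {x. Dg x < a}"
    have "1/(2*real i+1) \<le> 1" by simp
    moreover have "x \<le> 1/(2*real i+1)" "x > 0" using x by auto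
    ultimately have "x \<le> 1" "x > 0" by linarith+
    then obtain k :: nat where k: "Dg x = 2*(real k+1)" using Dg_ex[of x] by blast
    then show "x \<in> {0<..1/(2*real i+1)} \<inter> {x. \<exists>k\<in>K. Dg x = 2*(real k+1) \<and> Sm x \<in> Bset n t \<inter> {y. Dg y < t*(2*(real k+1))}}"
      using x Bset_Suc[of x n t] unfolding K_def by (auto simp: mult.commute)
  qed
  have sub2: "{0<..1/(2*real i+1)} \<inter> {x. \<exists>k\<in>K. Dg x = 2*(real k+1)} \<subseteq> {0<..1/(2*real i+1)} \<inter> {x. Dg x < a}"
    unfolding K_def by auto
  have "emeasure lborel ({0<..1/(2*real i+1)} \<inter> Bset (Suc n) t \<inter> {x. Dg x < a}) \<le>
     emeasure lborel ({0<..1/(2*real i+1)} \<inter> {x. \<exists>k\<in>K. Dg x = 2*(real k+1) \<and> Sm x \<in> Bset n t \<inter> {y. Dg y < t*(2*(real k+1))}})"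
    by (rule emeasure_mono[OF sub1]) measurable
  also have "\<dots> \<le> ennreal ((1 - 1/(3*t))^Suc n) * emeasure lborel ({0<..1/(2*real i+1)} \<inter> {x. \<exists>k\<in>K. Dg x = 2*(real k+1)})"
    by (rule lower_step[OF t Suc.IH])
  also have "\<dots> \<le> ennreal ((1 - 1/(3*t))^Suc n) * emeasure lborel ({0<..1/(2*real i+1)} \<inter> {x. Dg x < a})"
    by (intro mult_left_mono emeasure_mono[OF sub2]) auto
  finally show ?case .
qed

lemma lower_event:
  fixes t :: real and n :: nat
  assumes t: "t \<ge> 1"
  shows "emeasure lborel ({0<..1} \<inter> Bset n t) \<le> ennreal ((1 - 1/(3*t))^n)"
proof (cases n)
  case 0
  have "emeasure lborel ({0<..1} \<inter> Bset n t) \<le> emeasure lborel {0<..(1::real)}"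
    by (intro emeasure_mono) auto
  then show ?thesis using 0 by simp
next
  case (Suc m)
  have sub1: "{0<..1} \<inter> Bset (Suc m) t \<subseteq>
     {0<..1/(2*real (0::nat)+1)} \<inter> {x. \<exists>k\<in>UNIV. Dg x = 2*(real k+1) \<and> Sm x \<in> Bset m t \<inter> {y. Dg y < t*(2*(real k+1))}}"
  proof
    fix x assume x: "x \<in> {0<..1} \<inter> Bset (Suc m) t"
    then have "x \<le> 1" "x > 0" by auto
    then obtain k :: nat where k: "Dg x = 2*(real k+1)" using Dg_ex[of x] by blast
    then show "x \<in> {0<..1/(2*real (0::nat)+1)} \<inter> {x. \<exists>k\<in>UNIV. Dg x = 2*(real k+1) \<and> Sm x \<in> Bset m t \<inter> {y. Dg y < t*(2*(real k+1))}}"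
      using x Bset_Suc[of x m t] by (auto simp: mult.commute)
  qed
  have "emeasure lborel ({0<..1} \<inter> Bset n t) \<le>
     emeasure lborel ({0<..1/(2*real (0::nat)+1)} \<inter> {x. \<exists>k\<in>UNIV. Dg x = 2*(real k+1) \<and> Sm x \<in> Bset m t \<inter> {y. Dg y < t*(2*(real k+1))}})"
    unfolding Suc by (rule emeasure_mono[OF sub1]) measurable
  also have "\<dots> \<le> ennreal ((1 - 1/(3*t))^Suc m) * emeasure lborel ({0<..1/(2*real (0::nat)+1)} \<inter> {x. \<exists>k\<in>UNIV. Dg x = 2*(real k+1)})"
    by (rule lower_step[OF t lower_claim[OF t]])
  also have "\<dots> \<le> ennreal ((1 - 1/(3*t))^Suc m / (2*real (0::nat)+1))"
    by (rule final_bound) (use t in \<open>simp add: field_simps\<close>)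
  finally show ?thesis using Suc by simp
qed



lemma upper_AE:
  fixes m :: nat
  shows "AE x in lborel. x \<in> {0<..1} \<longrightarrow>
    (\<forall>\<^sub>F n in sequentially. dig (Suc n) x \<le> real (Suc n) powr (1 + 1/(real m+1)) * dig n x)"
proof -
  define p where "p = 1 + 1/(real m+1)"
  have p: "p > 1" unfolding p_def by (simp add: field_simps)
  define s where "s n = real (Suc n) powr p" for n
  have s1: "s n \<ge> 1" for n unfolding s_def using p by (simp add: ge_one_powr_ge_zero)
  define A where "A n = {x. dig (Suc n) x > s n * dig n x} \<inter> {0<..1}" for n
  have Am[measurable]: "A n \<in> sets lborel" for n unfolding A_def by measurable
  have Ae: "emeasure lborel (A n) \<le> ennreal (3/s n)" for n
    unfolding A_def by (rule upper_event[OF s1])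
  have Afin: "emeasure lborel (A n) < \<infinity>" for n
    using Ae[of n] by (simp add: le_less_trans)
  have "summable (\<lambda>n. measure lborel (A n))"
  proof (rule summable_comparison_test')
    have "summable (\<lambda>n. real n powr (-p))" using p by (simp add: summable_real_powr_iff)
    then have "summable (\<lambda>n. real (Suc n) powr (-p))" by (subst summable_Suc_iff)
    then show "summable (\<lambda>n. 3 * real (Suc n) powr (-p))" by (rule summable_mult)
    fix n :: nat assume "n \<ge> 0"
    have "measure lborel (A n) \<le> 3 / s n"
      unfolding measure_def by (rule enn2real_leI) (use Ae[of n] s1[of n] in auto)
    also have "3 / s n = 3 * real (Suc n) powr (-p)" unfolding s_def by (simp add: powr_minus_divide)
    finally show "norm (measure lborel (A n)) \<le> 3 * real (Suc n) powr (-p)" by simp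
  qed
  then have "AE x in lborel. eventually (\<lambda>n. x \<in> space lborel - A n) sequentially"
    by (intro borel_cantelli_AE1[OF Am Afin])
  then show ?thesis
  proof (rule eventually_mono)
    fix x assume ev: "eventually (\<lambda>n. x \<in> space lborel - A n) sequentially"
    show "x \<in> {0<..1} \<longrightarrow> (\<forall>\<^sub>F n in sequentially. dig (Suc n) x \<le> real (Suc n) powr (1 + 1/(real m+1)) * dig n x)"
    proof
      assume x01: "x \<in> {0<..1}"
      show "\<forall>\<^sub>F n in sequentially. dig (Suc n) x \<le> real (Suc n) powr (1 + 1/(real m+1)) * dig n x"
        using ev by (rule eventually_mono) (use x01 in \<open>auto simp: A_def s_def p_def not_less\<close>)
    qed
  qed
qed

definition gL :: "nat \<Rightarrow> real" where "gL n = real (n+1) / (ln (real n + 2))^2"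

lemma lower_AE:
  shows "AE x in lborel. x \<in> {0<..1} \<longrightarrow> (\<forall>\<^sub>F n in sequentially. x \<notin> Bset n (gL n))"
proof -
  define A where "A n = {0<..1} \<inter> Bset n (gL n)" for n
  have Am[measurable]: "A n \<in> sets lborel" for n unfolding A_def by measurable
  have A1: "emeasure lborel (A n) \<le> 1" for n
  proof -
    have "emeasure lborel (A n) \<le> emeasure lborel {0<..(1::real)}" unfolding A_def by (intro emeasure_mono) auto
    then show ?thesis by simp
  qed
  have Afin: "emeasure lborel (A n) < \<infinity>" for n
    using A1[of n] by (simp add: le_less_trans)
  have ev1: "\<forall>\<^sub>F n in sequentially. gL n \<ge> 1" unfolding gL_def by real_asymp
  have ev2: "\<forall>\<^sub>F n in sequentially. exp (- real n / (3 * gL n)) \<le> real n powr (-2)" unfolding gL_def by real_asymp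
  have "summable (\<lambda>n. measure lborel (A n))"
  proof -
    obtain N where N: "\<And>n. n \<ge> N \<Longrightarrow> gL n \<ge> 1 \<and> exp (- real n / (3 * gL n)) \<le> real n powr (-2)"
      using eventually_conj[OF ev1 ev2] unfolding eventually_sequentially by blast
    show ?thesis
    proof (rule summable_comparison_test')
      show "summable (\<lambda>n. real n powr (-2))" by (simp add: summable_real_powr_iff)
      fix n assume n: "n \<ge> N"
      have g: "gL n \<ge> 1" using N[OF n] by auto
      define q where "q = 1 - 1/(3 * gL n)"
      have q0: "0 \<le> q" unfolding q_def using g by (simp add: field_simps)
      have "measure lborel (A n) \<le> q^n"
        unfolding measure_def A_def q_def by (rule enn2real_leI) (use lower_event[OF g, of n] q0 q_def in auto)
      also have "q^n \<le> exp (- 1/(3 * gL n))^n"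
        by (rule power_mono) (use q0 exp_ge_add_one_self[of "- 1/(3 * gL n)"] in \<open>auto simp: q_def\<close>)
      also have "\<dots> = exp (- real n / (3 * gL n))" by (simp add: exp_of_nat_mult[symmetric])
      also have "\<dots> \<le> real n powr (-2)" using N[OF n] by auto
      finally show "norm (measure lborel (A n)) \<le> real n powr (-2)" by simp
    qed
  qed
  then have "AE x in lborel. eventually (\<lambda>n. x \<in> space lborel - A n) sequentially"
    by (intro borel_cantelli_AE1[OF Am Afin])
  then show ?thesis
  proof (rule eventually_mono)
    fix x assume ev: "eventually (\<lambda>n. x \<in> space lborel - A n) sequentially"
    show "x \<in> {0<..1} \<longrightarrow> (\<forall>\<^sub>F n in sequentially. x \<notin> Bset n (gL n))"
      using ev by (auto simp: A_def elim: eventually_mono)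
  qed
qed



lemma inv_lt_iff: "(x::real) > 0 \<Longrightarrow> a > 0 \<Longrightarrow> 1/a < x \<longleftrightarrow> 1/x < a"
  by (simp add: pos_divide_less_eq mult.commute)
lemma lt_inv_iff: "(x::real) > 0 \<Longrightarrow> a > 0 \<Longrightarrow> x < 1/a \<longleftrightarrow> a < 1/x"
  by (simp add: pos_less_divide_eq mult.commute)
lemma inv_le_iff: "(x::real) > 0 \<Longrightarrow> a > 0 \<Longrightarrow> 1/a \<le> x \<longleftrightarrow> 1/x \<le> a"
  by (simp add: pos_divide_le_eq mult.commute)

lemma step_irr:
  fixes x :: real
  assumes x: "0 < x" "x < 1" "x \<notin> \<rat>"
  shows "sengel_T x = Sm x \<and> real_of_int (sengel_d1 x) = Dg x \<and> 0 < Sm x \<and> Sm x < 1 \<and> Sm x \<notin> \<rat>"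
proof -
  define y where "y = 1/x"
  have y1: "y > 1" unfolding y_def using x by (simp add: field_simps)
  have yirr: "y \<notin> \<rat>"
  proof
    assume "y \<in> \<rat>" then have "1/y \<in> \<rat>" by simp
    then show False using x unfolding y_def by simp
  qed
  have yint: "y \<noteq> real_of_int z" for z using yirr by (metis Rats_of_int)
  define k where "k = \<lfloor>(y + 1)/2\<rfloor>"
  have kb: "2*real_of_int k - 1 \<le> y" "y < 2*real_of_int k + 1"
    unfolding k_def using of_int_floor_le[of "(y+1)/2"] real_of_int_floor_add_one_gt[of "(y+1)/2"] by (simp_all add: field_simps)
  have kb': "2*real_of_int k - 1 < y"
    using kb(1) yint[of "2*k - 1"] by (cases "2*real_of_int k - 1 = y") auto
  have "real_of_int k > 0" using kb(2) y1 by linarith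
  then have k1: "k \<ge> 1" by simp
  define kn where "kn = nat k"
  have kn: "real kn = real_of_int k" "kn \<ge> 1" unfolding kn_def using k1 by auto
  have Dgx: "Dg x = 2 * real_of_int k" unfolding Dg_def k_def y_def by simp
  have ne0: "\<not> (x = 0 \<or> (\<exists>n::nat. n \<ge> 2 \<and> x = 1 / real n))"
  proof
    assume "x = 0 \<or> (\<exists>n::nat. n \<ge> 2 \<and> x = 1 / real n)"
    then obtain n :: nat where "x = 1/real n" using x by auto
    then have "x \<in> \<rat>" by simp
    then show False using x by simp
  qed
  have iv: "1 / real (2*k') < x \<and> x < 1 / (real (2*k') - 1) \<longleftrightarrow> real (2*k') - 1 < y \<and> y < real (2*k')"
    if "k' \<ge> 1" for k' :: nat
  proof -
    have a: "real (2*k') - 1 > 0" "real (2*k') > 0" using that by auto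
    show ?thesis unfolding y_def using inv_lt_iff[OF x(1) a(2)] lt_inv_iff[OF x(1) a(1)] by auto
  qed
  have iv2: "1 / real (2*k') \<le> x \<and> x < 1 / (real (2*k') - 1) \<longleftrightarrow> real (2*k') - 1 < y \<and> y \<le> real (2*k')"
    if "k' \<ge> 1" for k' :: nat
  proof -
    have a: "real (2*k') - 1 > 0" "real (2*k') > 0" using that by auto
    show ?thesis unfolding y_def using inv_le_iff[OF x(1) a(2)] lt_inv_iff[OF x(1) a(1)] by auto
  qed
  have iv3: "1 / real (2*k'+1) < x \<and> x < 1 / real (2*k') \<longleftrightarrow> real (2*k') < y \<and> y < real (2*k'+1)"
    if "k' \<ge> 1" for k' :: nat
  proof -
    have a: "real (2*k'+1) > 0" "real (2*k') > 0" using that by auto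
    show ?thesis unfolding y_def using inv_lt_iff[OF x(1) a(1)] lt_inv_iff[OF x(1) a(2)] by auto
  qed
  show ?thesis
  proof (cases "y < 2 * real_of_int k")
    case True
    have c2: "\<exists>k'::nat. k' \<ge> 1 \<and> 1 / real (2*k') < x \<and> x < 1 / (real (2*k') - 1)"
      using iv[of kn] kn kb' True by (intro exI[of _ kn]) auto
    have c2': "\<exists>k'::nat. k' \<ge> 1 \<and> 1 / real (2*k') \<le> x \<and> x < 1 / (real (2*k') - 1)"
      using iv2[of kn] kn kb' True by (intro exI[of _ kn]) auto
    have ce: "\<lceil>y\<rceil> = 2*k" using kb' True by (intro ceiling_unique) auto
    have T: "sengel_T x = 2 * real_of_int k * x - 1"
    proof -
      have "sengel_T x = real_of_int \<lceil>1 / x\<rceil> * x - 1"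
        unfolding sengel_T_def by (simp only: if_not_P[OF ne0] if_P[OF c2])
      then show ?thesis using ce y_def by simp
    qed
    have d: "real_of_int (sengel_d1 x) = 2 * real_of_int k"
    proof -
      have "sengel_d1 x = \<lceil>1 / x\<rceil>"
        unfolding sengel_d1_def by (simp only: if_P[OF c2'])
      then show ?thesis using ce y_def by simp
    qed
    have xk: "2 * real_of_int k * x > 1" using True x(1) unfolding y_def by (simp add: field_simps)
    have S: "Sm x = 2 * real_of_int k * x - 1" unfolding Sm_def Dgx using xk by simp
    have lt: "2 * real_of_int k * x - 1 < 1"
    proof -
      have "y > 2*real_of_int k - 1" by (rule kb')
      then have "(2*real_of_int k - 1) * x < 1" using x(1) unfolding y_def by (simp add: field_simps)
      then have "2 * real_of_int k * x - 1 < x" by (simp add: algebra_simps)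
      then show ?thesis using x(2) by linarith
    qed
    have irr: "2 * real_of_int k * x - 1 \<notin> \<rat>"
    proof
      assume "2 * real_of_int k * x - 1 \<in> \<rat>"
      then have "2 * real_of_int k * x - 1 + 1 \<in> \<rat>" by (rule Rats_add) simp
      then have "(2 * real_of_int k * x - 1 + 1) / (2 * real_of_int k) \<in> \<rat>" by (rule Rats_divide) simp
      then show False using x k1 by simp
    qed
    show ?thesis using T d S Dgx xk lt irr by simp
  next
    case False
    then have F: "y > 2 * real_of_int k" using yint[of "2*k"] by (cases "y = 2 * real_of_int k") auto
    have nc2: "\<not> (\<exists>k'::nat. k' \<ge> 1 \<and> 1 / real (2*k') < x \<and> x < 1 / (real (2*k') - 1))"
    proof
      assume "\<exists>k'::nat. k' \<ge> 1 \<and> 1 / real (2*k') < x \<and> x < 1 / (real (2*k') - 1)"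
      then obtain k' :: nat where "k' \<ge> 1" "real (2*k') - 1 < y" "y < real (2*k')" using iv by blast
      then have h: "real_of_int k < real_of_int (int k')" "real_of_int (int k') < real_of_int (k + 1)" using F kb by auto
      have "k < int k'" using h(1) by (simp only: of_int_less_iff)
      moreover have "int k' < k + 1" using h(2) by (simp only: of_int_less_iff)
      ultimately show False by linarith
    qed
    have nc2': "\<not> (\<exists>k'::nat. k' \<ge> 1 \<and> 1 / real (2*k') \<le> x \<and> x < 1 / (real (2*k') - 1))"
    proof
      assume "\<exists>k'::nat. k' \<ge> 1 \<and> 1 / real (2*k') \<le> x \<and> x < 1 / (real (2*k') - 1)"
      then obtain k' :: nat where "k' \<ge> 1" "real (2*k') - 1 < y" "y \<le> real (2*k')" using iv2 by blast
      then have h: "real_of_int k < real_of_int (int k')" "real_of_int (int k') < real_of_int (k + 1)" using F kb by auto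
      have "k < int k'" using h(1) by (simp only: of_int_less_iff)
      moreover have "int k' < k + 1" using h(2) by (simp only: of_int_less_iff)
      ultimately show False by linarith
    qed
    have c3: "\<exists>k'::nat. k' \<ge> 1 \<and> 1 / real (2*k'+1) < x \<and> x < 1 / real (2*k')"
      using iv3[of kn] kn kb F by (intro exI[of _ kn]) auto
    have fe: "\<lfloor>y\<rfloor> = 2*k" using kb F by (intro floor_unique) auto
    have T: "sengel_T x = 1 - 2 * real_of_int k * x"
    proof -
      have "sengel_T x = 1 - real_of_int \<lfloor>1 / x\<rfloor> * x"
        unfolding sengel_T_def by (simp only: if_not_P[OF ne0] if_not_P[OF nc2] if_P[OF c3])
      then show ?thesis using fe y_def by simp
    qed
    have d: "real_of_int (sengel_d1 x) = 2 * real_of_int k"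
    proof -
      have "sengel_d1 x = \<lfloor>1 / x\<rfloor>"
        unfolding sengel_d1_def by (simp only: if_not_P[OF nc2'])
      then show ?thesis using fe y_def by simp
    qed
    have xk: "2 * real_of_int k * x < 1" using F x(1) unfolding y_def by (simp add: field_simps)
    have S: "Sm x = 1 - 2 * real_of_int k * x" unfolding Sm_def Dgx using xk by simp
    have pos: "0 < 2 * real_of_int k * x" using x(1) k1 by simp
    have irr: "1 - 2 * real_of_int k * x \<notin> \<rat>"
    proof
      assume "1 - 2 * real_of_int k * x \<in> \<rat>"
      then have "1 - (1 - 2 * real_of_int k * x) \<in> \<rat>" by (rule Rats_diff[OF Rats_1])
      then have "(1 - (1 - 2 * real_of_int k * x)) / (2 * real_of_int k) \<in> \<rat>" by (rule Rats_divide) simp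
      then show False using x k1 by simp
    qed
    show ?thesis using T d S Dgx xk pos irr by simp
  qed
qed

lemma iter_irr:
  fixes x :: real
  assumes x: "0 < x" "x < 1" "x \<notin> \<rat>"
  shows "(sengel_T ^^ n) x = (Sm ^^ n) x \<and> 0 < (Sm ^^ n) x \<and> (Sm ^^ n) x < 1 \<and> (Sm ^^ n) x \<notin> \<rat>"
proof (induction n)
  case 0 then show ?case using x by simp
next
  case (Suc n)
  then show ?case using step_irr[of "(Sm ^^ n) x"] by simp
qed

lemma sengel_d_dig:
  fixes x :: real
  assumes x: "0 < x" "x < 1" "x \<notin> \<rat>"
  shows "real_of_int (sengel_d (Suc n) x) = dig n x"
  using iter_irr[OF x, of n] step_irr[of "(Sm ^^ n) x"] unfolding sengel_d_def dig_def by simp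

lemma dig_ge2:
  fixes x :: real
  assumes x: "0 < x" "x < 1" "x \<notin> \<rat>"
  shows "dig n x \<ge> 2"
proof -
  have "0 < (Sm ^^ n) x" "(Sm ^^ n) x \<le> 1" using iter_irr[OF x, of n] by auto
  then obtain k :: nat where "Dg ((Sm ^^ n) x) = 2*(real k+1)" using Dg_ex by blast
  then show ?thesis unfolding dig_def by simp
qed

lemma sengel_R_dig:
  fixes x :: real
  assumes x: "0 < x" "x < 1" "x \<notin> \<rat>"
  shows "sengel_R (Suc 0) x = dig 0 x" "sengel_R (Suc (Suc n)) x = dig (Suc n) x / dig n x"
  unfolding sengel_R_def using sengel_d_dig[OF x] by simp_all



lemma lim_core:
  fixes M :: "nat \<Rightarrow> real"
  assumes pos: "\<forall>\<^sub>F n in sequentially. M n > 0"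
    and low: "\<forall>\<^sub>F n in sequentially. M n \<ge> real n / (ln (real n + 1))^2"
    and up: "\<And>m::nat. \<exists>C>0. \<forall>\<^sub>F n in sequentially. M n \<le> max C (real n powr (1 + 1/(real m+1)))"
  shows "(\<lambda>n. ln (M n) / ln (real n)) \<longlonglongrightarrow> 1"
  unfolding tendsto_iff
proof (intro allI impI)
  fix e :: real assume e: "e > 0"
  have l: "(\<lambda>n. ln (real n / (ln (real n + 1))^2) / ln (real n)) \<longlonglongrightarrow> 1" by real_asymp
  then have ev_l: "\<forall>\<^sub>F n in sequentially. ln (real n / (ln (real n + 1))^2) / ln (real n) > 1 - e"
    using e unfolding tendsto_iff dist_real_def by (auto elim!: allE[of _ e] eventually_mono)
  obtain m :: nat where m: "2/e < real m" using reals_Archimedean2 by blast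
  have pe: "1/(real m+1) < e/2"
  proof -
    have "2/e < real m + 1" using m by linarith
    then have "2 < e * (real m + 1)" using e by (simp add: field_simps)
    then show ?thesis using e by (simp add: field_simps)
  qed
  obtain C where C: "C > 0" "\<forall>\<^sub>F n in sequentially. M n \<le> max C (real n powr (1 + 1/(real m+1)))"
    using up[of m] by blast
  have "(\<lambda>n. ln C / ln (real n)) \<longlonglongrightarrow> 0" by real_asymp
  then have ev_C: "\<forall>\<^sub>F n in sequentially. \<bar>ln C / ln (real n)\<bar> < e/2"
    using e unfolding tendsto_iff dist_real_def by (auto elim!: allE[of _ "e/2"] eventually_mono)
  have ev2: "\<forall>\<^sub>F n in sequentially. n \<ge> 2" by (rule eventually_ge_at_top)
  show "\<forall>\<^sub>F n in sequentially. dist (ln (M n) / ln (real n)) 1 < e"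
    using pos low C(2) ev_l ev_C ev2
  proof eventually_elim
    case (elim n)
    define p where "p = 1 + 1/(real m+1)"
    have n2: "real n \<ge> 2" using elim by simp
    have lnn: "ln (real n) > 0" using n2 by simp
    have lnn1: "ln (real n + 1) > 0" using n2 by simp
    have hpos: "real n / (ln (real n + 1))^2 > 0" using n2 lnn1 by simp
    have Mp: "M n > 0" using elim by simp
    have "ln (real n / (ln (real n + 1))^2) \<le> ln (M n)" using elim hpos Mp by (subst ln_le_cancel_iff) auto
    then have "ln (real n / (ln (real n + 1))^2) / ln (real n) \<le> ln (M n) / ln (real n)"
      using lnn by (simp add: divide_right_mono)
    then have lowb: "ln (M n) / ln (real n) > 1 - e" using elim by linarith
    have upb: "ln (M n) / ln (real n) < 1 + e"
    proof (cases "M n \<le> C")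
      case True
      then have "ln (M n) \<le> ln C" using elim C(1) by simp
      then have "ln (M n) / ln (real n) \<le> ln C / ln (real n)" using lnn by (simp add: divide_right_mono)
      then show ?thesis using elim e by linarith
    next
      case False
      then have "M n \<le> real n powr p" using elim unfolding p_def by linarith
      moreover have "real n powr p > 0" using n2 by simp
      ultimately have "ln (M n) \<le> ln (real n powr p)" using Mp by (subst ln_le_cancel_iff) auto
      also have "\<dots> = p * ln (real n)" using n2 by (simp add: ln_powr)
      finally have "ln (M n) / ln (real n) \<le> p" using lnn by (simp add: divide_le_eq)
      then show ?thesis using pe e unfolding p_def by linarith
    qed
    show ?case using lowb upb unfolding dist_real_def by linarith
  qed
qed

lemma pointwise:
  fixes x :: real
  assumes x: "0 < x" "x < 1" "x \<notin> \<rat>"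
    and U: "\<And>m::nat. \<forall>\<^sub>F n in sequentially. dig (Suc n) x \<le> real (Suc n) powr (1 + 1/(real m+1)) * dig n x"
    and L: "\<forall>\<^sub>F n in sequentially. x \<notin> Bset n (gL n)"
  shows "(\<lambda>n. ln (sengel_M n x) / ln (real n)) \<longlonglongrightarrow> 1"
proof (rule lim_core)
  define R where "R k = sengel_R k x" for k
  have Mdef: "sengel_M n x = Max (R ` {1..n})" for n unfolding sengel_M_def R_def by simp
  have Rle: "R k \<le> sengel_M n x" if "1 \<le> k" "k \<le> n" for k n
    unfolding Mdef using that by (intro Max_ge) auto
  have dpos: "dig j x > 0" for j using dig_ge2[OF x, of j] by simp
  have R1: "R (Suc 0) = dig 0 x" unfolding R_def using sengel_R_dig(1)[OF x] .
  have RSS: "R (Suc (Suc j)) = dig (Suc j) x / dig j x" for j unfolding R_def using sengel_R_dig(2)[OF x] .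
  have Mpos: "sengel_M n x \<ge> 2" if "n \<ge> 1" for n
    using Rle[of 1 n] that R1 dig_ge2[OF x, of 0] by simp
  show "\<forall>\<^sub>F n in sequentially. sengel_M n x > 0"
    using eventually_ge_at_top[of 1] by eventually_elim (use Mpos in force)
  have "\<forall>\<^sub>F n in sequentially. sengel_M (Suc n) x \<ge> gL n"
    using L
  proof eventually_elim
    case (elim n)
    then obtain i where i: "i < n" "\<not> dig (Suc i) x < gL n * dig i x" unfolding Bset_def by auto
    then have "gL n * dig i x \<le> dig (Suc i) x" by simp
    then have "gL n \<le> R (Suc (Suc i))" unfolding RSS using dpos[of i] by (simp add: pos_le_divide_eq)
    also have "\<dots> \<le> sengel_M (Suc n) x" using i by (intro Rle) auto
    finally show ?case .
  qed
  then have "\<forall>\<^sub>F n in sequentially. sengel_M (Suc n) x \<ge> real (Suc n) / (ln (real (Suc n) + 1))^2"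
    by (rule eventually_mono) (simp add: gL_def add.commute)
  then show "\<forall>\<^sub>F n in sequentially. sengel_M n x \<ge> real n / (ln (real n + 1))^2"
    by (subst (asm) eventually_sequentially_Suc)
  fix m :: nat
  define p where "p = 1 + 1/(real m+1)"
  have p: "p \<ge> 0" unfolding p_def by simp
  obtain N where N: "\<And>n. n \<ge> N \<Longrightarrow> dig (Suc n) x \<le> real (Suc n) powr p * dig n x"
    using U[of m] unfolding eventually_sequentially p_def by blast
  define C where "C = sengel_M (Suc N) x"
  have Cp: "C > 0" unfolding C_def using Mpos[of "Suc N"] by simp
  have "\<forall>\<^sub>F n in sequentially. sengel_M n x \<le> max C (real n powr p)"
    using eventually_ge_at_top[of 1]
  proof eventually_elim
    case (elim n)
    have "R k \<le> max C (real n powr p)" if k: "k \<in> {1..n}" for k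
    proof (cases "k \<le> Suc N")
      case True
      then have "R k \<le> C" unfolding C_def using k by (intro Rle) auto
      then show ?thesis by simp
    next
      case False
      then obtain j where j: "k = Suc (Suc j)" "j \<ge> N" by (metis Suc_le_D not_less_eq_eq Suc_le_mono)
      have "R k = dig (Suc j) x / dig j x" unfolding j RSS ..
      also have "\<dots> \<le> real (Suc j) powr p" using N[OF j(2)] dpos[of j] by (simp add: pos_divide_le_eq)
      also have "\<dots> \<le> real n powr p" using k j p by (intro powr_mono2) auto
      finally show ?thesis by simp
    qed
    then show ?case unfolding Mdef using elim by (subst Max_le_iff) auto
  qed
  then show "\<exists>C>0. \<forall>\<^sub>F n in sequentially. sengel_M n x \<le> max C (real n powr (1 + 1/(real m+1)))"
    using Cp unfolding p_def by blast
qed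

theorem corollary1p9:
  shows "AE x in lebesgue. x \<in> {0<..<1} \<and> x \<notin> \<rat> \<longrightarrow>
           (\<lambda>n. ln (sengel_M n x) / ln (real n)) \<longlonglongrightarrow> 1"
proof -
  have AE1: "AE x in lborel. \<forall>m::nat. x \<in> {0<..1} \<longrightarrow>
    (\<forall>\<^sub>F n in sequentially. dig (Suc n) x \<le> real (Suc n) powr (1 + 1/(real m+1)) * dig n x)"
    by (subst AE_all_countable) (use upper_AE in blast)
  have "AE x in lborel. x \<in> {0<..<1} \<and> x \<notin> \<rat> \<longrightarrow> (\<lambda>n. ln (sengel_M n x) / ln (real n)) \<longlonglongrightarrow> 1"
    using AE1 lower_AE
  proof eventually_elim
    case (elim x)
    show ?case
    proof
      assume x: "x \<in> {0<..<1} \<and> x \<notin> \<rat>"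
      then have x1: "x \<in> {0<..1}" by auto
      show "(\<lambda>n. ln (sengel_M n x) / ln (real n)) \<longlonglongrightarrow> 1"
        by (rule pointwise) (use x x1 elim in auto)
    qed
  qed
  then show ?thesis by (rule AE_completion)
qed


end
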